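(* Let $e(\tau,s)$ be a complete equation of state and let $s_0$ be fixed. Assume the energy isentrope $\tau\mapsto e_{s_0}(\tau):=e(\tau,s_0)$ is convex on $(0,\infty)$. For $\bm u=(\rho,\bm m,E)\in\mathbb R\times\mathbb R^d\times\mathbb R$ with $\rho>0$, set $\tau(\bm u)=\rho^{-1}$ and $\mathsf e(\bm u)=\rho^{-1}E-\tfrac12\|\rho^{-1}\bm m\|_{\ell^2}^2$. Then the functional $$\bm u\longmapsto \rho\,\mathsf e(\bm u)-\rho\, e_{s_0}(\tau(\bm u))$$ is a concave function of $\bm u$ on $\{\rho>0\}$.
   Context: A complete equation of state is a function $e(\tau,s)$ giving the specific internal energy in terms of specific volume $\tau>0$ and specific entropy $s$; the pressure is $p=-\partial_\tau e$ and the temperature $T=\partial_s e$. The "energy isentrope" at entropy $s$ is the one-variable function $\tau\mapsto e(\tau,s)$. *)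

theory Defs
  imports "HOL-Analysis.Analysis"
begin

text \<open>Conserved variables u = (rho, m, E) in R x R^d x R, with m :: real^'d.\<close>

definition spec_vol :: "real \<times> (real ^ 'd) \<times> real \<Rightarrow> real" where
  "spec_vol u = inverse (fst u)"

definition spec_int_energy :: "real \<times> (real ^ 'd) \<times> real \<Rightarrow> real" where
  "spec_int_energy u = inverse (fst u) * snd (snd u)
      - (1/2) * (norm (inverse (fst u) *\<^sub>R fst (snd u)))\<^sup>2"

end

theory Submission
  imports Defs
begin

lemma persp_scalar:
  fixes f :: "real \<Rightarrow> real"
  assumes cf: "convex_on {0<..} f" and r1: "r1 > 0" and r2: "r2 > 0"
    and a: "a \<ge> 0" and b: "b \<ge> 0" and ab: "a + b = 1"
  shows "(a*r1 + b*r2) * f (inverse (a*r1 + b*r2)) \<le> a * (r1 * f (inverse r1)) + b * (r2 * f (inverse r2))"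
proof -
  define r where "r = a*r1 + b*r2"
  have rpos: "r > 0" unfolding r_def
    using a b ab r1 r2 by (smt (verit) mult_nonneg_nonneg mult_pos_pos)
  define c where "c = a*r1/r"
  define d where "d = b*r2/r"
  have c0: "c \<ge> 0" using a r1 rpos by (simp add: c_def)
  have d0: "d \<ge> 0" using b r2 rpos by (simp add: d_def)
  have cd: "c + d = 1" using rpos by (simp add: c_def d_def r_def add_divide_distrib[symmetric])
  have eq: "inverse r = c * inverse r1 + d * inverse r2"
  proof -
    have "c * inverse r1 + d * inverse r2 = (a + b) / r"
      using r1 r2 rpos by (simp add: c_def d_def field_simps)
    then show ?thesis using ab by (simp add: divide_inverse)
  qed
  have "f (inverse r) \<le> c * f (inverse r1) + d * f (inverse r2)"
  proof -
    have c1: "c = 1 - d" using cd by simp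
    have "f ((1 - d) *\<^sub>R inverse r1 + d *\<^sub>R inverse r2) \<le> (1 - d) * f (inverse r1) + d * f (inverse r2)"
      using convex_onD[OF cf, of d "inverse r1" "inverse r2"] c0 d0 cd r1 r2 c1 by (simp del: c1)
    moreover have "(1 - d) *\<^sub>R inverse r1 + d *\<^sub>R inverse r2 = inverse r" using eq c1 by (simp del: c1)
    ultimately show ?thesis using c1 by simp
  qed
  then have "r * f (inverse r) \<le> r * (c * f (inverse r1) + d * f (inverse r2))"
    using rpos by (simp add: mult_left_mono)
  also have "\<dots> = a * (r1 * f (inverse r1)) + b * (r2 * f (inverse r2))"
    using rpos by (simp add: c_def d_def field_simps)
  finally show ?thesis by (simp add: r_def)
qed

lemma persp_norm:
  fixes m1 m2 :: "'a::real_normed_vector"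
  assumes r1: "r1 > 0" and r2: "r2 > 0"
    and a: "a \<ge> 0" and b: "b \<ge> 0" and ab: "a + b = 1"
  shows "(norm (a *\<^sub>R m1 + b *\<^sub>R m2))\<^sup>2 / (a*r1 + b*r2)
    \<le> a * ((norm m1)\<^sup>2 / r1) + b * ((norm m2)\<^sup>2 / r2)"
proof -
  define r where "r = a*r1 + b*r2"
  have rpos: "r > 0" unfolding r_def
    using a b ab r1 r2 by (smt (verit) mult_nonneg_nonneg mult_pos_pos)
  define p where "p = norm m1"
  define q where "q = norm m2"
  have "norm (a *\<^sub>R m1 + b *\<^sub>R m2) \<le> a*p + b*q"
    using norm_triangle_ineq[of "a *\<^sub>R m1" "b *\<^sub>R m2"] a b by (simp add: p_def q_def)
  then have n2: "(norm (a *\<^sub>R m1 + b *\<^sub>R m2))\<^sup>2 \<le> (a*p + b*q)\<^sup>2"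
    by (simp add: power_mono)
  have key: "r * (a * (p\<^sup>2 / r1) + b * (q\<^sup>2 / r2)) - (a*p + b*q)\<^sup>2
      = a*b*(p*r2 - q*r1)\<^sup>2 / (r1*r2)"
    using r1 r2 ab unfolding r_def
    by (simp add: field_simps power2_eq_square)
  have "a*b*(p*r2 - q*r1)\<^sup>2 / (r1*r2) \<ge> 0" using a b r1 r2 by simp
  then have "(a*p + b*q)\<^sup>2 \<le> r * (a * (p\<^sup>2 / r1) + b * (q\<^sup>2 / r2))" using key by linarith
  with n2 have "(norm (a *\<^sub>R m1 + b *\<^sub>R m2))\<^sup>2 \<le> r * (a * (p\<^sup>2 / r1) + b * (q\<^sup>2 / r2))" by linarith
  then show ?thesis using rpos by (simp add: r_def[symmetric] p_def q_def pos_divide_le_eq mult.commute)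
qed

theorem proposition2p8:
  fixes e :: "real \<Rightarrow> real \<Rightarrow> real" and s0 :: real
  assumes "convex_on {0<..} (\<lambda>\<tau>. e \<tau> s0)"
  shows "concave_on {u :: real \<times> (real ^ 'd) \<times> real. fst u > 0}
           (\<lambda>u. fst u * spec_int_energy u - fst u * e (spec_vol u) s0)"
proof -
  let ?S = "{u :: real \<times> (real ^ 'd) \<times> real. fst u > 0}"
  let ?g = "\<lambda>u::real \<times> (real ^ 'd) \<times> real. snd (snd u) - (norm (fst (snd u)))\<^sup>2 / (2 * fst u)
              - fst u * e (inverse (fst u)) s0"
  have feq: "fst u * spec_int_energy u - fst u * e (spec_vol u) s0 = ?g u" if "fst u > 0" for u :: "real \<times> (real ^ 'd) \<times> real"
    using that by (simp add: spec_int_energy_def spec_vol_def power2_eq_square field_simps)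
  have cS: "convex ?S"
  proof -
    have "?S = {x. 0 < (1::real, 0::real^'d, 0::real) \<bullet> x}" by (auto simp: inner_prod_def)
    then show ?thesis using convex_halfspace_gt[of 0 "(1::real, 0::real^'d, 0::real)"] by simp
  qed
  have "concave_on ?S ?g"
    unfolding concave_on_iff
  proof (intro conjI cS ballI allI impI)
    fix x y :: "real \<times> (real ^ 'd) \<times> real" and a b :: real
    assume x: "x \<in> ?S" and y: "y \<in> ?S" and a: "a \<ge> 0" and b: "b \<ge> 0" and ab: "a + b = 1"
    obtain r1 m1 E1 where xe: "x = (r1, m1, E1)" by (cases x) auto
    obtain r2 m2 E2 where ye: "y = (r2, m2, E2)" by (cases y) auto
    have r1: "r1 > 0" using x xe by simp
    have r2: "r2 > 0" using y ye by simp
    have A: "(a*r1 + b*r2) * e (inverse (a*r1 + b*r2)) s0 \<le> a * (r1 * e (inverse r1) s0) + b * (r2 * e (inverse r2) s0)"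
      using persp_scalar[OF assms r1 r2 a b ab] by simp
    have B: "(norm (a *\<^sub>R m1 + b *\<^sub>R m2))\<^sup>2 / (a*r1 + b*r2)
      \<le> a * ((norm m1)\<^sup>2 / r1) + b * ((norm m2)\<^sup>2 / r2)"
      using persp_norm[OF r1 r2 a b ab] .
    have B2: "(norm (a *\<^sub>R m1 + b *\<^sub>R m2))\<^sup>2 / (2*(a*r1 + b*r2))
      \<le> a * ((norm m1)\<^sup>2 / (2*r1)) + b * ((norm m2)\<^sup>2 / (2*r2))"
    proof -
      have "(norm (a *\<^sub>R m1 + b *\<^sub>R m2))\<^sup>2 / (a*r1 + b*r2) / 2
      \<le> (a * ((norm m1)\<^sup>2 / r1) + b * ((norm m2)\<^sup>2 / r2)) / 2"
        using divide_right_mono[OF B, of 2] by simp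
      moreover have e1: "(norm (a *\<^sub>R m1 + b *\<^sub>R m2))\<^sup>2 / (2*(a*r1 + b*r2)) = (norm (a *\<^sub>R m1 + b *\<^sub>R m2))\<^sup>2 / (a*r1 + b*r2) / 2"
        by simp
      moreover have e2: "a * ((norm m1)\<^sup>2 / (2*r1)) + b * ((norm m2)\<^sup>2 / (2*r2)) = (a * ((norm m1)\<^sup>2 / r1) + b * ((norm m2)\<^sup>2 / r2)) / 2"
        by (simp add: add_divide_distrib)
      ultimately show ?thesis by (simp only: e1 e2)
    qed
    have E: "a*E1 + b*E2 = a*E1 + b*E2" ..
    show "a * ?g x + b * ?g y \<le> ?g (a *\<^sub>R x + b *\<^sub>R y)"
    proof -
      have comb: "a *\<^sub>R x + b *\<^sub>R y = (a*r1+b*r2, a*\<^sub>R m1 + b*\<^sub>R m2, a*E1+b*E2)"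
        by (simp add: xe ye)
      have g1: "?g (a *\<^sub>R x + b *\<^sub>R y) = (a*E1+b*E2) - (norm (a *\<^sub>R m1 + b *\<^sub>R m2))\<^sup>2 / (2*(a*r1 + b*r2))
          - (a*r1 + b*r2) * e (inverse (a*r1 + b*r2)) s0"
        by (simp only: comb fst_conv snd_conv)
      have g2: "a * ?g x + b * ?g y = (a*E1+b*E2) - (a * ((norm m1)\<^sup>2 / (2*r1)) + b * ((norm m2)\<^sup>2 / (2*r2)))
          - (a * (r1 * e (inverse r1) s0) + b * (r2 * e (inverse r2) s0))"
        by (simp only: xe ye fst_conv snd_conv right_diff_distrib)
      show ?thesis using A B2 g1 g2 by linarith
    qed
  qed
  then have H: "\<And>x y a b. x \<in> ?S \<Longrightarrow> y \<in> ?S \<Longrightarrow> a \<ge> 0 \<Longrightarrow> b \<ge> 0 \<Longrightarrow> a + b = 1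
      \<Longrightarrow> a * ?g x + b * ?g y \<le> ?g (a *\<^sub>R x + b *\<^sub>R y)"
    unfolding concave_on_iff by blast
  show ?thesis
    unfolding concave_on_iff
  proof (intro conjI cS ballI allI impI)
    fix x y :: "real \<times> (real ^ 'd) \<times> real" and a b :: real
    assume x: "x \<in> ?S" and y: "y \<in> ?S" and a: "a \<ge> 0" and b: "b \<ge> 0" and ab: "a + b = 1"
    have xy: "a *\<^sub>R x + b *\<^sub>R y \<in> ?S" using convexD[OF cS x y a b ab] .
    have f1: "fst x * spec_int_energy x - fst x * e (spec_vol x) s0 = ?g x" using x feq by blast
    have f2: "fst y * spec_int_energy y - fst y * e (spec_vol y) s0 = ?g y" using y feq by blast
    have f3: "fst (a *\<^sub>R x + b *\<^sub>R y) * spec_int_energy (a *\<^sub>R x + b *\<^sub>R y) - fst (a *\<^sub>R x + b *\<^sub>R y) * e (spec_vol (a *\<^sub>R x + b *\<^sub>R y)) s0 = ?g (a *\<^sub>R x + b *\<^sub>R y)"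
      using xy feq by blast
    show "a * (fst x * spec_int_energy x - fst x * e (spec_vol x) s0) + b * (fst y * spec_int_energy y - fst y * e (spec_vol y) s0)
      \<le> fst (a *\<^sub>R x + b *\<^sub>R y) * spec_int_energy (a *\<^sub>R x + b *\<^sub>R y) - fst (a *\<^sub>R x + b *\<^sub>R y) * e (spec_vol (a *\<^sub>R x + b *\<^sub>R y)) s0"
      unfolding f1 f2 f3 using H[OF x y a b ab] .
  qed
qed

end
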